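(* Let $f:\{0,1\}^n\to\{0,1\}$, $J\subseteq[n]$, and let $f_J$ be a $J$-symmetric function closest to $f$. Then $$\mathrm{dist}(f,f_J)\le\mathrm{SymInf}_f(J)\le 2\cdot\mathrm{dist}(f,f_J).$$
   Context: $\mathcal{S}_J$ is the set of permutations of $[n]$ fixing every element outside $J$; for a permutation $\pi$, $\pi x$ is the vector whose $\pi(i)$-th coordinate is $x_i$. $f$ is $J$-symmetric if $f(\pi x)=f(x)$ for all $x$ and $\pi\in\mathcal{S}_J$. $\mathrm{dist}(f,g)=\Pr_x[f(x)\ne g(x)]$ for uniform $x\in\{0,1\}^n$. $\mathrm{SymInf}_f(J)=\Pr_{x,\pi}[f(x)\ne f(\pi x)]$ with $x$ uniform in $\{0,1\}^n$ and $\pi$ uniform in $\mathcal{S}_J$. *)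

theory Defs
  imports Complex_Main "HOL-Combinatorics.Permutations"
begin

text \<open>Coordinates [n] are modelled by a finite type 'n; points of {0,1}^n are
  functions 'n \<Rightarrow> bool; Boolean functions map to bool.\<close>

definition perm_act :: "('n \<Rightarrow> 'n) \<Rightarrow> ('n \<Rightarrow> bool) \<Rightarrow> ('n \<Rightarrow> bool)" where
  "perm_act \<pi> x = (\<lambda>j. x (inv \<pi> j))"   \<comment> \<open>(\<pi> x)_{\<pi> i} = x_i\<close>

definition sym_group :: "'n set \<Rightarrow> ('n \<Rightarrow> 'n) set" where
  "sym_group J = {\<pi>. \<pi> permutes J}"

definition J_symmetric :: "'n set \<Rightarrow> (('n \<Rightarrow> bool) \<Rightarrow> bool) \<Rightarrow> bool" where
  "J_symmetric J f \<longleftrightarrow> (\<forall>x. \<forall>\<pi>\<in>sym_group J. f (perm_act \<pi> x) = f x)"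

definition bdist :: "(('n::finite \<Rightarrow> bool) \<Rightarrow> bool) \<Rightarrow> (('n \<Rightarrow> bool) \<Rightarrow> bool) \<Rightarrow> real" where
  "bdist f g = real (card {x. f x \<noteq> g x}) / real (card (UNIV :: ('n \<Rightarrow> bool) set))"

definition SymInf :: "(('n::finite \<Rightarrow> bool) \<Rightarrow> bool) \<Rightarrow> 'n set \<Rightarrow> real" where
  "SymInf f J = real (card {(x, \<pi>). \<pi> \<in> sym_group J \<and> f x \<noteq> f (perm_act \<pi> x)})
     / (real (card (UNIV :: ('n \<Rightarrow> bool) set)) * real (card (sym_group J)))"

end

theory Submission
  imports Defs
begin

lemma pa_comp:
  assumes "bij p" "bij q"
  shows "perm_act p (perm_act q x) = perm_act (p \<circ> q) x"
  unfolding perm_act_def using o_inv_distrib[OF assms] by (simp add: o_def)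

lemma pa_inv:
  assumes "bij p"
  shows "perm_act (inv p) (perm_act p x) = x"
  unfolding perm_act_def using assms
  by (simp add: inv_inv_eq bij_is_inj)

lemma pa_inv2:
  assumes "bij p"
  shows "perm_act p (perm_act (inv p) x) = x"
  unfolding perm_act_def using assms
  by (simp add: inv_inv_eq bij_is_surj surj_f_inv_f)

lemma sum_pa:
  fixes h :: "('n::finite \<Rightarrow> bool) \<Rightarrow> real"
  assumes "bij p"
  shows "(\<Sum>x\<in>UNIV. h (perm_act p x)) = (\<Sum>x\<in>UNIV. h x)"
  by (rule sum.reindex_bij_witness[where i="perm_act (inv p)" and j="perm_act p"])
     (auto simp: pa_inv pa_inv2 assms)

lemma G_bij: "\<pi> \<in> sym_group J \<Longrightarrow> bij \<pi>"
  unfolding sym_group_def by (auto dest: permutes_bij)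

lemma G_fin: "finite (sym_group (J::'n::finite set))"
  unfolding sym_group_def by simp

lemma G_id: "id \<in> sym_group J"
  unfolding sym_group_def by (simp add: permutes_id)

lemma G_card: "card (sym_group (J::'n::finite set)) > 0"
  using G_fin G_id card_gt_0_iff by blast

lemma card_real_sum:
  assumes "finite A"
  shows "real (card {z\<in>A. P z}) = (\<Sum>z\<in>A. of_bool (P z))"
  using assms by (simp add: sum.inter_filter[symmetric] Int_def conj_commute)

lemma keyK:
  fixes f :: "('n::finite \<Rightarrow> bool) \<Rightarrow> bool" and \<phi> :: "('n \<Rightarrow> bool) \<Rightarrow> real"
  assumes sym: "\<And>x \<sigma>. \<sigma> \<in> sym_group J \<Longrightarrow> \<phi> (perm_act \<sigma> x) = \<phi> x"
  shows "(\<Sum>x\<in>UNIV. of_bool (f x) * \<phi> x)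
     = (\<Sum>x\<in>UNIV. ((\<Sum>\<pi>\<in>sym_group J. of_bool (f (perm_act \<pi> x))) / real (card (sym_group J))) * \<phi> x)"
proof -
  let ?G = "sym_group J"
  let ?m = "real (card ?G)"
  have m0: "?m > 0" using G_card by simp
  have "(\<Sum>x\<in>UNIV. ((\<Sum>\<pi>\<in>?G. of_bool (f (perm_act \<pi> x))) / ?m) * \<phi> x)
      = (\<Sum>x\<in>UNIV. (\<Sum>\<pi>\<in>?G. of_bool (f (perm_act \<pi> x)) * \<phi> x)) / ?m"
    by (simp add: sum_divide_distrib sum_distrib_right)
  also have "(\<Sum>x\<in>UNIV. (\<Sum>\<pi>\<in>?G. of_bool (f (perm_act \<pi> x)) * \<phi> x))
      = (\<Sum>\<pi>\<in>?G. (\<Sum>x\<in>UNIV. of_bool (f (perm_act \<pi> x)) * \<phi> x))"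
    by (rule sum.swap)
  also have "\<dots> = (\<Sum>\<pi>\<in>?G. (\<Sum>x\<in>UNIV. of_bool (f x) * \<phi> x))"
  proof (rule sum.cong[OF refl])
    fix \<pi> assume h: "\<pi> \<in> ?G"
    have "(\<Sum>x\<in>UNIV. of_bool (f (perm_act \<pi> x)) * \<phi> x)
        = (\<Sum>x\<in>UNIV. of_bool (f (perm_act \<pi> x)) * \<phi> (perm_act \<pi> x))"
      using sym[OF h] by simp
    also have "\<dots> = (\<Sum>x\<in>UNIV. of_bool (f x) * \<phi> x)"
      using sum_pa[OF G_bij[OF h], of "\<lambda>y. of_bool (f y) * \<phi> y"] by simp
    finally show "(\<Sum>x\<in>UNIV. of_bool (f (perm_act \<pi> x)) * \<phi> x) = (\<Sum>x\<in>UNIV. of_bool (f x) * \<phi> x)" .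
  qed
  also have "\<dots> = ?m * (\<Sum>x\<in>UNIV. of_bool (f x) * \<phi> x)" by simp
  finally have e: "(\<Sum>x\<in>UNIV. ((\<Sum>\<pi>\<in>?G. of_bool (f (perm_act \<pi> x))) / ?m) * \<phi> x)
     = ?m * (\<Sum>x\<in>UNIV. of_bool (f x) * \<phi> x) / ?m" .
  show ?thesis unfolding e using m0 by (metis less_irrefl nonzero_mult_div_cancel_left)
qed

theorem lemma3:
  fixes f fJ :: "('n::finite \<Rightarrow> bool) \<Rightarrow> bool" and J :: "'n set"
  assumes "J_symmetric J fJ"
    and "\<And>g. J_symmetric J g \<Longrightarrow> bdist f fJ \<le> bdist f g"
  shows "bdist f fJ \<le> SymInf f J \<and> SymInf f J \<le> 2 * bdist f fJ"
proof -
  define G where "G = sym_group J"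
  define m where "m = real (card G)"
  define N where "N = real (card (UNIV :: ('n \<Rightarrow> bool) set))"
  have m0: "m > 0" unfolding m_def G_def using G_card by simp
  have N0: "N > 0" unfolding N_def by (simp add: card_gt_0_iff)
  have finG: "finite G" unfolding G_def by (rule G_fin)
  define D where "D = (\<lambda>g. (\<Sum>x\<in>UNIV. of_bool (f x \<noteq> g x)) :: real)"
  define S where "S = (\<Sum>x\<in>(UNIV::('n \<Rightarrow> bool) set). \<Sum>\<pi>\<in>G. of_bool (f x \<noteq> f (perm_act \<pi> x)) :: real)"
  have bd: "bdist f g = D g / N" for g
  proof -
    have "{x. f x \<noteq> g x} = {x\<in>UNIV. f x \<noteq> g x}" by simp
    then show ?thesis unfolding bdist_def D_def N_def using card_real_sum[of UNIV "\<lambda>x. f x \<noteq> g x"] by simp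
  qed
  have SI: "SymInf f J = S / (N * m)"
  proof -
    have "{(x, \<pi>). \<pi> \<in> sym_group J \<and> f x \<noteq> f (perm_act \<pi> x)}
        = {z\<in>UNIV \<times> G. case z of (x, \<pi>) \<Rightarrow> f x \<noteq> f (perm_act \<pi> x)}"
      unfolding G_def by auto
    then have "real (card {(x, \<pi>). \<pi> \<in> sym_group J \<and> f x \<noteq> f (perm_act \<pi> x)})
        = real (card {z\<in>UNIV \<times> G. case z of (x, \<pi>) \<Rightarrow> f x \<noteq> f (perm_act \<pi> x)})" by simp
    also have "\<dots> = (\<Sum>z\<in>UNIV \<times> G. of_bool (case z of (x, \<pi>) \<Rightarrow> f x \<noteq> f (perm_act \<pi> x)))"
      by (rule card_real_sum) (simp add: finG)
    also have "\<dots> = S" unfolding S_def sum.cartesian_product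
      by (rule sum.cong) (auto split: prod.splits)
    finally show ?thesis unfolding SymInf_def N_def m_def G_def by simp
  qed
  have symJ: "fJ (perm_act \<pi> x) = fJ x" if "\<pi> \<in> G" for \<pi> x
    using assms(1) that unfolding J_symmetric_def G_def by blast
  have "S \<le> (\<Sum>x\<in>UNIV. \<Sum>\<pi>\<in>G. of_bool (f x \<noteq> fJ x) + of_bool (f (perm_act \<pi> x) \<noteq> fJ (perm_act \<pi> x)))"
    unfolding S_def
    by (intro sum_mono) (auto simp: symJ)
  also have "\<dots> = (\<Sum>\<pi>\<in>G. \<Sum>x\<in>UNIV. of_bool (f x \<noteq> fJ x) + of_bool (f (perm_act \<pi> x) \<noteq> fJ (perm_act \<pi> x)))"
    by (rule sum.swap)
  also have "\<dots> = (\<Sum>\<pi>\<in>G. 2 * D fJ)"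
  proof (rule sum.cong[OF refl])
    fix \<pi> assume h: "\<pi> \<in> G"
    have "(\<Sum>x\<in>UNIV. of_bool (f (perm_act \<pi> x) \<noteq> fJ (perm_act \<pi> x)) :: real) = D fJ"
      unfolding D_def using sum_pa[OF G_bij[OF h[unfolded G_def]], of "\<lambda>y. of_bool (f y \<noteq> fJ y)"] by simp
    then show "(\<Sum>x\<in>UNIV. of_bool (f x \<noteq> fJ x) + of_bool (f (perm_act \<pi> x) \<noteq> fJ (perm_act \<pi> x))) = 2 * D fJ"
      unfolding sum.distrib D_def by simp
  qed
  also have "\<dots> = m * (2 * D fJ)" unfolding m_def by simp
  finally have up: "S \<le> m * (2 * D fJ)" .
  have upper: "SymInf f J \<le> 2 * bdist f fJ"
    unfolding SI bd using up m0 N0 by (simp add: divide_simps mult.commute mult.left_commute)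
  define q where "q = (\<lambda>x. (\<Sum>\<pi>\<in>G. of_bool (f (perm_act \<pi> x))) :: real)"
  define p where "p = (\<lambda>x. q x / m)"
  define g where "g = (\<lambda>x. 1/2 \<le> p x)"
  have q_sym: "q (perm_act \<sigma> x) = q x" if hs: "\<sigma> \<in> G" for \<sigma> x
  proof -
    have bs: "bij \<sigma>" using G_bij hs unfolding G_def by blast
    have ps: "\<sigma> permutes J" using hs unfolding G_def sym_group_def by simp
    have "q (perm_act \<sigma> x) = (\<Sum>\<pi>\<in>G. of_bool (f (perm_act (\<pi> \<circ> \<sigma>) x)))"
      unfolding q_def
      by (rule sum.cong[OF refl]) (simp add: pa_comp bs G_bij[of _ J, folded G_def])
    also have "\<dots> = q x" unfolding q_def
    proof (rule sum.reindex_bij_witness[where i="\<lambda>\<pi>. \<pi> \<circ> inv \<sigma>" and j="\<lambda>\<pi>. \<pi> \<circ> \<sigma>"])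
      fix a assume "a \<in> G"
      then have pa: "a permutes J" unfolding G_def sym_group_def by simp
      show "a \<circ> inv \<sigma> \<circ> \<sigma> = a" using bs by (simp add: o_assoc[symmetric] bij_is_inj)
      show "a \<circ> inv \<sigma> \<in> G" unfolding G_def sym_group_def
        using permutes_compose[OF permutes_inv[OF ps] pa] by simp
      show "a \<circ> \<sigma> \<circ> inv \<sigma> = a" using bs by (simp add: o_assoc[symmetric] bij_is_surj[THEN surj_iff[THEN iffD1]])
      show "a \<circ> \<sigma> \<in> G" unfolding G_def sym_group_def
        using permutes_compose[OF ps pa] by simp
      show "of_bool (f (perm_act (a \<circ> \<sigma>) x)) = (of_bool (f (perm_act (a \<circ> \<sigma>) x)) :: real)"
        by simp
    qed
    finally show ?thesis .
  qed
  have p_sym: "p (perm_act \<sigma> x) = p x" if "\<sigma> \<in> G" for \<sigma> x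
    unfolding p_def using q_sym[OF that] by simp
  have K: "(\<Sum>x\<in>UNIV. of_bool (f x) * \<phi> x) = (\<Sum>x\<in>UNIV. p x * \<phi> x)"
    if "\<And>x \<sigma>. \<sigma> \<in> G \<Longrightarrow> \<phi> (perm_act \<sigma> x) = \<phi> x" for \<phi>
    unfolding p_def q_def m_def G_def using keyK[of J \<phi> f] that unfolding G_def by blast
  have q_bd: "0 \<le> q x \<and> q x \<le> m" for x
  proof -
    have "q x \<le> (\<Sum>\<pi>\<in>G. 1)" unfolding q_def by (intro sum_mono) simp
    then show ?thesis unfolding m_def q_def by (simp add: sum_nonneg)
  qed
  have p_bd: "0 \<le> p x \<and> p x \<le> 1" for x
    using q_bd[of x] m0 unfolding p_def by (simp add: divide_simps)
  have gJ: "J_symmetric J g"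
    unfolding J_symmetric_def g_def using p_sym unfolding G_def by simp
  have Dle: "D fJ \<le> D g" using assms(2)[OF gJ] N0 unfolding bd by (simp add: divide_simps)
  have "D g = (\<Sum>x\<in>UNIV. of_bool (f x) * of_bool (\<not> g x) + (of_bool (g x) - of_bool (f x) * of_bool (g x)))"
    unfolding D_def by (rule sum.cong) auto
  also have "\<dots> = (\<Sum>x\<in>UNIV. of_bool (f x) * of_bool (\<not> g x)) + (\<Sum>x\<in>UNIV. of_bool (g x))
       - (\<Sum>x\<in>UNIV. of_bool (f x) * of_bool (g x))"
    by (simp add: sum.distrib sum_subtractf)
  also have "\<dots> = (\<Sum>x\<in>UNIV. p x * of_bool (\<not> g x)) + (\<Sum>x\<in>UNIV. of_bool (g x))
       - (\<Sum>x\<in>UNIV. p x * of_bool (g x))"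
    using K[of "\<lambda>x. of_bool (\<not> g x)"] K[of "\<lambda>x. of_bool (g x)"] by (simp add: g_def p_sym)
  also have "\<dots> = (\<Sum>x\<in>UNIV. p x * of_bool (\<not> g x) + of_bool (g x) - p x * of_bool (g x))"
    by (simp add: sum.distrib sum_subtractf)
  also have "\<dots> \<le> (\<Sum>x\<in>UNIV. p x * (1 - p x) + p x - p x * p x)"
  proof (rule sum_mono)
    fix x
    have b: "0 \<le> p x" "p x \<le> 1" using p_bd[of x] by auto
    show "p x * of_bool (\<not> g x) + of_bool (g x) - p x * of_bool (g x) \<le> p x * (1 - p x) + p x - p x * p x"
    proof (cases "g x")
      case True
      then have "1/2 \<le> p x" unfolding g_def by simp
      then have h: "(1 - p x) * 1 \<le> (1 - p x) * (2 * p x)" using b by (intro mult_left_mono) auto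
      show ?thesis using True h by (simp add: algebra_simps)
    next
      case False
      then have "p x < 1/2" unfolding g_def by simp
      then have h: "p x * 1 \<le> p x * (2 * (1 - p x))" using b by (intro mult_left_mono) auto
      show ?thesis using False h by (simp add: algebra_simps)
    qed
  qed
  also have "\<dots> = (\<Sum>x\<in>UNIV. of_bool (f x) * (1 - p x)) + (\<Sum>x\<in>UNIV. p x) - (\<Sum>x\<in>UNIV. of_bool (f x) * p x)"
    using K[of "\<lambda>x. 1 - p x"] K[of p] by (simp add: p_sym sum.distrib sum_subtractf)
  also have "\<dots> = (\<Sum>x\<in>UNIV. of_bool (f x) * (1 - p x) + (1 - of_bool (f x)) * p x)"
  proof -
    have "(\<Sum>x\<in>UNIV. of_bool (f x) * (1 - p x) + (1 - of_bool (f x)) * p x)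
       = (\<Sum>x\<in>UNIV. of_bool (f x) * (1 - p x) + p x - of_bool (f x) * p x)"
      by (rule sum.cong) (auto simp: algebra_simps)
    also have "\<dots> = (\<Sum>x\<in>UNIV. of_bool (f x) * (1 - p x)) + (\<Sum>x\<in>UNIV. p x) - (\<Sum>x\<in>UNIV. of_bool (f x) * p x)"
      by (simp only: sum.distrib sum_subtractf)
    finally show ?thesis by simp
  qed
  also have "\<dots> = S / m"
  proof -
    have "(\<Sum>\<pi>\<in>G. of_bool (f x \<noteq> f (perm_act \<pi> x))) = m * (of_bool (f x) * (1 - p x) + (1 - of_bool (f x)) * p x)" for x
    proof -
      have "(\<Sum>\<pi>\<in>G. of_bool (f x \<noteq> f (perm_act \<pi> x)))
          = (\<Sum>\<pi>\<in>G. of_bool (f x) * (1 - of_bool (f (perm_act \<pi> x))) + (1 - of_bool (f x)) * (of_bool (f (perm_act \<pi> x)) :: real))"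
        by (rule sum.cong) auto
      also have "\<dots> = of_bool (f x) * (m - q x) + (1 - of_bool (f x)) * q x"
        unfolding q_def m_def by (simp add: sum.distrib sum_subtractf sum_distrib_left[symmetric])
      also have "\<dots> = m * (of_bool (f x) * (1 - p x) + (1 - of_bool (f x)) * p x)"
        unfolding p_def using m0 by (simp add: algebra_simps)
      finally show ?thesis .
    qed
    then show ?thesis unfolding S_def using m0 by (simp add: sum_distrib_left[symmetric])
  qed
  finally have "D fJ \<le> S / m" using Dle by linarith
  then have lower: "bdist f fJ \<le> SymInf f J"
    unfolding SI bd using m0 N0 by (simp add: divide_simps mult.commute)
  show ?thesis using lower upper by simp
qed

end
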